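(* Let $\mathbb{K}$ be a field equipped with a non-Archimedean valuation $|\cdot|$, and assume that the characteristic of $\mathbb{K}$ is not $2$. Let $\mathcal{X}$ be a non-Archimedean linear space over $\mathbb{K}$ with non-Archimedean norm $\|\cdot\|$. Write $|2|$ for the valuation of the element $2=1+1\in\mathbb{K}$ (a positive real number). Then for all $x, y \in \mathcal{X}$, \begin{align*} \Big|\|x\|-\|y\|\Big| &\leq \frac{2}{|2|}\max\{\|x-y\|, \|x+y\|\}-(\|x\|+\|y\|)\\ &\leq \frac{2}{|2|}\max\{\|x\|, \|y\|\}-(\|x\|+\|y\|) \end{align*} and \begin{align*} \Big|\|x\|-\|y\|\Big| \leq \|x\|+\|y\|-\frac{2}{|2|}\Big|\|x+y\|-\|x-y\|\Big|. \end{align*} In particular, if $|2|=1$, then for all $x,y\in\mathcal{X}$, \begin{align*} \Big|\|x\|-\|y\|\Big| &\leq 2\max\{\|x-y\|, \|x+y\|\}-(\|x\|+\|y\|)\leq 2\max\{\|x\|, \|y\|\}-(\|x\|+\|y\|) \end{align*} and \begin{align*} \Big|\|x\|-\|y\|\Big| \leq \|x\|+\|y\|-2\Big|\|x+y\|-\|x-y\|\Big|. \end{align*}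
   Context: A non-Archimedean valuation on a field $\mathbb{K}$ is a map $|\cdot|:\mathbb{K}\to[0,\infty)$ such that: (i) $|\lambda|=0$ implies $\lambda=0$; (ii) $|\lambda\mu|=|\lambda||\mu|$ for all $\lambda,\mu\in\mathbb{K}$; (iii) $|\lambda+\mu|\le\max\{|\lambda|,|\mu|\}$ for all $\lambda,\mu\in\mathbb{K}$. A non-Archimedean linear space over such a field $\mathbb{K}$ is a vector space $\mathcal{X}$ over $\mathbb{K}$ with a map $\|\cdot\|:\mathcal{X}\to[0,\infty)$ such that: (i) $\|x\|=0$ implies $x=0$; (ii) $\|\lambda x\|=|\lambda|\|x\|$ for all $\lambda\in\mathbb{K}$, $x\in\mathcal{X}$; (iii) $\|x+y\|\le\max\{\|x\|,\|y\|\}$ for all $x,y\in\mathcal{X}$. In the statement, the numerator $2$ in $\frac{2}{|2|}$ is the real number $2$, and the outer absolute values $|\cdot|$ applied to differences of norms are ordinary real absolute values. *)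

theory Defs
  imports Complex_Main
begin

definition nonarch_valuation :: "('k::field \<Rightarrow> real) \<Rightarrow> bool" where
  "nonarch_valuation v \<longleftrightarrow>
     (\<forall>a. 0 \<le> v a) \<and>
     (\<forall>a. v a = 0 \<longrightarrow> a = 0) \<and>
     (\<forall>a b. v (a * b) = v a * v b) \<and>
     (\<forall>a b. v (a + b) \<le> max (v a) (v b))"

definition nonarch_norm ::
  "('k::field \<Rightarrow> real) \<Rightarrow> ('k \<Rightarrow> 'x \<Rightarrow> 'x) \<Rightarrow> ('x::ab_group_add \<Rightarrow> real) \<Rightarrow> bool" where
  "nonarch_norm v scale N \<longleftrightarrow>
     (\<forall>x. 0 \<le> N x) \<and>
     (\<forall>x. N x = 0 \<longrightarrow> x = 0) \<and>
     (\<forall>a x. N (scale a x) = v a * N x) \<and>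
     (\<forall>x y. N (x + y) \<le> max (N x) (N y))"

end

theory Submission
  imports Defs
begin

lemma core:
  fixes v :: "'k::field \<Rightarrow> real"
    and scale :: "'k \<Rightarrow> 'x::ab_group_add \<Rightarrow> 'x"
    and N :: "'x \<Rightarrow> real"
  assumes val: "nonarch_valuation v"
    and char: "(2::'k) \<noteq> 0"
    and vs: "vector_space scale"
    and nrm: "nonarch_norm v scale N"
  shows "\<bar>N x - N y\<bar> \<le> (2 / v 2) * max (N (x - y)) (N (x + y)) - (N x + N y) \<and>
            (2 / v 2) * max (N (x - y)) (N (x + y)) - (N x + N y)
              \<le> (2 / v 2) * max (N x) (N y) - (N x + N y) \<and>
            \<bar>N x - N y\<bar> \<le> N x + N y - (2 / v 2) * \<bar>N (x + y) - N (x - y)\<bar>"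
proof -
  interpret vector_space scale by (rule vs)
  have v0: "\<And>a. 0 \<le> v a" and vz: "\<And>a. v a = 0 \<Longrightarrow> a = 0"
    and vm: "\<And>a b. v (a*b) = v a * v b"
    using val unfolding nonarch_valuation_def by auto
  have N0: "\<And>x. 0 \<le> N x" and Ns: "\<And>a x. N (scale a x) = v a * N x"
    and Nt: "\<And>x y. N (x + y) \<le> max (N x) (N y)"
    using nrm unfolding nonarch_norm_def by auto
  have v1: "v 1 = 1"
  proof -
    have "v 1 = v 1 * v 1" using vm[of 1 1] by simp
    moreover have "v 1 \<noteq> 0" using vz[of 1] by auto
    ultimately show ?thesis by simp
  qed
  have vm1: "v (-1) = 1"
  proof -
    have "v (-1) * v (-1) = 1" using vm[of "-1" "-1"] v1 by simp
    then show ?thesis using v0[of "-1"]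
      by (metis abs_of_nonneg abs_square_eq_1 power2_eq_square)
  qed
  have neg: "\<And>z. N (- z) = N z"
  proof -
    fix z
    have "scale (-1) z = - z"
      using scale_minus_left[of 1 z] by simp
    then show "N (- z) = N z" using Ns[of "-1" z] vm1 by simp
  qed
  have two: "\<And>z. N (z + z) = v 2 * N z"
  proof -
    fix z
    have "scale 2 z = scale (1 + 1) z" by (metis one_add_one)
    also have "\<dots> = z + z" using scale_left_distrib[of 1 1 z] by simp
    finally have "scale 2 z = z + z" .
    then show "N (z + z) = v 2 * N z" using Ns by metis
  qed
  have v2p: "v 2 > 0" using v0[of 2] vz[of 2] char by force
  define a where "a = N x"
  define b where "b = N y"
  define p where "p = N (x + y)"
  define q where "q = N (x - y)"
  have ha: "v 2 * a \<le> max q p"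
  proof -
    have "x + x = (x - y) + (x + y)" by (simp add: algebra_simps)
    then show ?thesis using two[of x] Nt[of "x - y" "x + y"] unfolding a_def p_def q_def by simp
  qed
  have hb: "v 2 * b \<le> max q p"
  proof -
    have "y + y = (x + y) + - (x - y)" by (simp add: algebra_simps)
    then show ?thesis using two[of y] Nt[of "x + y" "- (x - y)"] neg[of "x - y"]
      unfolding b_def p_def q_def by simp
  qed
  have hq: "q \<le> max a b"
    using Nt[of x "- y"] neg[of y] unfolding a_def b_def q_def by simp
  have hp: "p \<le> max a b"
    using Nt[of x y] unfolding a_def b_def p_def by simp
  have pq1: "p \<le> max q (v 2 * b)"
  proof -
    have "x + y = (x - y) + (y + y)" by (simp add: algebra_simps)
    then show ?thesis using Nt[of "x - y" "y + y"] two[of y] unfolding b_def p_def q_def by simp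
  qed
  have pq2: "q \<le> max p (v 2 * b)"
  proof -
    have "x - y = (x + y) + - (y + y)" by (simp add: algebra_simps)
    then show ?thesis using Nt[of "x + y" "- (y + y)"] two[of y] neg[of "y + y"]
      unfolding b_def p_def q_def by simp
  qed
  have pq3: "p \<le> max q (v 2 * a)"
  proof -
    have "x + y = (y - x) + (x + x)" by (simp add: algebra_simps)
    moreover have "N (y - x) = q" using neg[of "x - y"] unfolding q_def by simp
    ultimately show ?thesis using Nt[of "y - x" "x + x"] two[of x] unfolding a_def p_def by (metis)
  qed
  have pq4: "q \<le> max p (v 2 * a)"
  proof -
    have "x - y = (x + y) + - (y + y) + 0" by (simp add: algebra_simps)
    have "y - x = (x + y) + - (x + x)" by (simp add: algebra_simps)
    moreover have "N (y - x) = q" using neg[of "x - y"] unfolding q_def by simp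
    ultimately show ?thesis using Nt[of "x + y" "- (x + x)"] two[of x] neg[of "x + x"]
      unfolding a_def p_def by simp
  qed
  have a0: "0 \<le> a" and b0: "0 \<le> b" and p0: "0 \<le> p" and q0: "0 \<le> q"
    using N0 unfolding a_def b_def p_def q_def by auto
  have vb: "0 \<le> v 2 * b" and va: "0 \<le> v 2 * a" using v2p a0 b0 by auto
  have d1: "p - q \<le> v 2 * b" using pq1 q0 vb by (cases "q \<le> v 2 * b") (simp_all add: max_def)
  have d2: "q - p \<le> v 2 * b" using pq2 p0 vb by (cases "p \<le> v 2 * b") (simp_all add: max_def)
  have d3: "p - q \<le> v 2 * a" using pq3 q0 va by (cases "q \<le> v 2 * a") (simp_all add: max_def)
  have d4: "q - p \<le> v 2 * a" using pq4 p0 va by (cases "p \<le> v 2 * a") (simp_all add: max_def)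
  have da: "\<bar>p - q\<bar> \<le> v 2 * a" using d3 d4 by (simp add: abs_le_iff)
  have db: "\<bar>p - q\<bar> \<le> v 2 * b" using d1 d2 by (simp add: abs_le_iff)
  have hab: "v 2 * max a b \<le> max q p" using ha hb by (cases "a \<le> b") (simp_all add: max_def)
  have e1: "2 * max a b \<le> (2 / v 2) * max q p"
  proof -
    have "(2 / v 2) * (v 2 * max a b) \<le> (2 / v 2) * max q p"
      using hab v2p by (intro mult_left_mono) auto
    then show ?thesis using v2p by simp
  qed
  have e2: "(2 / v 2) * max q p \<le> (2 / v 2) * max a b"
    using hp hq v2p by (intro mult_left_mono) auto
  have e3a: "(2 / v 2) * \<bar>p - q\<bar> \<le> 2 * a"
  proof -
    have "(2 / v 2) * \<bar>p - q\<bar> \<le> (2 / v 2) * (v 2 * a)"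
      using da v2p by (intro mult_left_mono) auto
    then show ?thesis using v2p by simp
  qed
  have e3b: "(2 / v 2) * \<bar>p - q\<bar> \<le> 2 * b"
  proof -
    have "(2 / v 2) * \<bar>p - q\<bar> \<le> (2 / v 2) * (v 2 * b)"
      using db v2p by (intro mult_left_mono) auto
    then show ?thesis using v2p by simp
  qed
  have m1: "a \<le> max a b" "b \<le> max a b" by auto
  have "\<bar>a - b\<bar> \<le> (2 / v 2) * max q p - (a + b)"
    using e1 m1 unfolding abs_le_iff by linarith
  moreover have "\<bar>a - b\<bar> \<le> a + b - (2 / v 2) * \<bar>p - q\<bar>"
    using e3a e3b unfolding abs_le_iff by linarith
  ultimately show ?thesis using e2 unfolding a_def b_def p_def q_def by linarith
qed

theorem theorem2p1:
  fixes v :: "'k::field \<Rightarrow> real"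
    and scale :: "'k \<Rightarrow> 'x::ab_group_add \<Rightarrow> 'x"
    and N :: "'x \<Rightarrow> real"
  assumes val: "nonarch_valuation v"
    and char: "(2::'k) \<noteq> 0"
    and vs: "vector_space scale"
    and nrm: "nonarch_norm v scale N"
  shows "(\<forall>x y.
            \<bar>N x - N y\<bar> \<le> (2 / v 2) * max (N (x - y)) (N (x + y)) - (N x + N y) \<and>
            (2 / v 2) * max (N (x - y)) (N (x + y)) - (N x + N y)
              \<le> (2 / v 2) * max (N x) (N y) - (N x + N y) \<and>
            \<bar>N x - N y\<bar> \<le> N x + N y - (2 / v 2) * \<bar>N (x + y) - N (x - y)\<bar>)
       \<and>
         (v 2 = 1 \<longrightarrow> (\<forall>x y.
            \<bar>N x - N y\<bar> \<le> 2 * max (N (x - y)) (N (x + y)) - (N x + N y) \<and>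
            2 * max (N (x - y)) (N (x + y)) - (N x + N y) \<le> 2 * max (N x) (N y) - (N x + N y) \<and>
            \<bar>N x - N y\<bar> \<le> N x + N y - 2 * \<bar>N (x + y) - N (x - y)\<bar>))"
proof (intro conjI allI impI)
  fix x y
  show "\<bar>N x - N y\<bar> \<le> (2 / v 2) * max (N (x - y)) (N (x + y)) - (N x + N y)"
       "(2 / v 2) * max (N (x - y)) (N (x + y)) - (N x + N y)
              \<le> (2 / v 2) * max (N x) (N y) - (N x + N y)"
       "\<bar>N x - N y\<bar> \<le> N x + N y - (2 / v 2) * \<bar>N (x + y) - N (x - y)\<bar>"
    using core[OF assms, of x y] by auto
next
  fix x y assume h: "v 2 = 1"
  have c: "\<bar>N x - N y\<bar> \<le> (2 / v 2) * max (N (x - y)) (N (x + y)) - (N x + N y) \<and>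
            (2 / v 2) * max (N (x - y)) (N (x + y)) - (N x + N y)
              \<le> (2 / v 2) * max (N x) (N y) - (N x + N y) \<and>
            \<bar>N x - N y\<bar> \<le> N x + N y - (2 / v 2) * \<bar>N (x + y) - N (x - y)\<bar>"
    by (rule core[OF assms])
  then show "\<bar>N x - N y\<bar> \<le> 2 * max (N (x - y)) (N (x + y)) - (N x + N y)"
       "2 * max (N (x - y)) (N (x + y)) - (N x + N y) \<le> 2 * max (N x) (N y) - (N x + N y)"
       "\<bar>N x - N y\<bar> \<le> N x + N y - 2 * \<bar>N (x + y) - N (x - y)\<bar>"
    unfolding h by simp_all
qed

end
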